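(* Let $0<\mu<L$, $q=\mu/L$, and define $A_0=0$, $A_{k+1}=\frac{(1+q)A_k+2\big(1+\sqrt{(1+A_k)(1+qA_k)}\big)}{(1-q)^2}$, $\delta_k=\sqrt{\frac{A_{k+1}}{1+qA_{k+1}}}$ and $\sigma_k=\sqrt{(1+A_k)(1+qA_k)}$ for $k\in\mathbb{N}_0$. Then for every $k\in\mathbb{N}_0$: $A_k\ge0$; $A_{k+1}>0$; $\delta_k>0$; $A_{k+1}-A_k\ge0$; $A_{k+1}-A_k+\sigma_{k+1}-\sigma_k\ge0$; $(1+q)A_{k+1}-A_k\ge0$; $(1+q)A_{k+1}-A_k-\sigma_k+1\ge0$; and $\sigma_k-1\ge0$. *)

theory Defs
  imports Complex_Main
begin

primrec seqA :: "real \<Rightarrow> nat \<Rightarrow> real" where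
  "seqA q 0 = 0"
| "seqA q (Suc k) =
     ((1 + q) * seqA q k + 2 * (1 + sqrt ((1 + seqA q k) * (1 + q * seqA q k)))) / (1 - q)^2"

definition seqdelta :: "real \<Rightarrow> nat \<Rightarrow> real" where
  "seqdelta q k = sqrt (seqA q (Suc k) / (1 + q * seqA q (Suc k)))"

definition seqsigma :: "real \<Rightarrow> nat \<Rightarrow> real" where
  "seqsigma q k = sqrt ((1 + seqA q k) * (1 + q * seqA q k))"

end

theory Submission
  imports Defs
begin

lemma sig_ge1:
  assumes "0 < q" "A \<ge> 0"
  shows "sqrt ((1 + A) * (1 + q * A)) \<ge> 1"
proof -
  have "(1 + A) * (1 + q * A) \<ge> 1 * 1"
    using assms by (intro mult_mono) auto
  thus ?thesis by simp
qed

lemma step_ge: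
  assumes "0 < q" "q < 1" "A \<ge> 0"
  shows "((1 + q) * A + 2 * (1 + sqrt ((1 + A) * (1 + q * A)))) / (1 - q)^2
         \<ge> (1 + q) * A + 2 * (1 + sqrt ((1 + A) * (1 + q * A)))"
proof -
  let ?N = "(1 + q) * A + 2 * (1 + sqrt ((1 + A) * (1 + q * A)))"
  have N: "?N \<ge> 0" using assms sig_ge1[OF assms(1,3)] by simp
  have d0: "(1 - q)^2 > 0" using assms by simp
  have d1: "(1 - q)^2 \<le> 1" using assms by (simp add: power2_eq_square mult_le_one)
  have "?N * (1 - q)^2 \<le> ?N" using N d1 by (simp add: mult_left_le)
  thus ?thesis using d0 by (simp add: le_divide_eq)
qed

lemma A_nonneg:
  assumes "0 < q" "q < 1"
  shows "seqA q k \<ge> 0"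
proof (induction k)
  case 0 then show ?case by simp
next
  case (Suc k)
  have "seqA q (Suc k) \<ge> (1 + q) * seqA q k + 2 * (1 + sqrt ((1 + seqA q k) * (1 + q * seqA q k)))"
    using step_ge[OF assms Suc] by simp
  moreover have "sqrt ((1 + seqA q k) * (1 + q * seqA q k)) \<ge> 1" using sig_ge1[OF assms(1) Suc] .
  ultimately show ?case using Suc assms by (smt (verit) mult_nonneg_nonneg)
qed

theorem lemma1:
  fixes mu L q :: real and k :: nat
  assumes "0 < mu" and "mu < L" and "q = mu / L"
  shows "seqA q k \<ge> 0 \<and> seqA q (Suc k) > 0 \<and> seqdelta q k > 0
    \<and> seqA q (Suc k) - seqA q k \<ge> 0
    \<and> seqA q (Suc k) - seqA q k + seqsigma q (Suc k) - seqsigma q k \<ge> 0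
    \<and> (1 + q) * seqA q (Suc k) - seqA q k \<ge> 0
    \<and> (1 + q) * seqA q (Suc k) - seqA q k - seqsigma q k + 1 \<ge> 0
    \<and> seqsigma q k - 1 \<ge> 0"
proof -
  have q0: "0 < q" using assms by simp
  have q1: "q < 1" using assms by simp
  define A where "A = seqA q k"
  define B where "B = seqA q (Suc k)"
  have A0: "A \<ge> 0" unfolding A_def using A_nonneg[OF q0 q1] .
  have s1: "seqsigma q k \<ge> 1" unfolding seqsigma_def using sig_ge1[OF q0 A0] A_def by simp
  have BA: "B \<ge> (1 + q) * A + 2 * (1 + seqsigma q k)"
    unfolding B_def A_def seqsigma_def using step_ge[OF q0 q1 A0] A_def by simp
  have qA: "q * A \<ge> 0" using q0 A0 by simp
  have B0: "B > 0" using BA s1 qA A0 by (simp add: distrib_right)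
  have qB: "q * B \<ge> 0" using q0 B0 by simp
  have AB: "A \<le> B" using BA s1 qA by (simp add: distrib_right)
  have mono: "seqsigma q (Suc k) \<ge> seqsigma q k"
    unfolding seqsigma_def A_def[symmetric] B_def[symmetric]
  proof (rule real_sqrt_le_mono, rule mult_mono)
    show "1 + q * A \<le> 1 + q * B" using AB q0 by (simp add: mult_left_mono)
  qed (use AB A0 qB qA in auto)
  have d: "seqdelta q k > 0" unfolding seqdelta_def B_def[symmetric]
    using B0 qB by simp
  show ?thesis
    using A0 B0 d AB mono BA s1 qA qB
    unfolding A_def[symmetric] B_def[symmetric]
    by (auto simp: algebra_simps)
qed

end
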